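(* Let $(p_n)_{n\ge1}\subset[0,1]$ with $p_n\to0$, and consider the population system with clone probability $p=p_n$ described in the context. Then, as $n\to\infty$: (a) If $0\le p_n\ll 1/\ln n$, then $Y_1^{(p_n)}(\tau_n)\to 1$ in distribution. (b) If $p_n\sim a/\ln n$ for some $a>0$, then $Y_1^{(p_n)}(\tau_n)$ converges in distribution to a geometric random variable $G$ with success parameter $e^{-a}$, i.e. $\mathbb P(G>x)=(1-e^{-a})^x$ for $x\in\{0,1,2,\dots\}$. (c) If $1/\ln n\ll p_n\ll 1$, then $n^{-p_n}Y_1^{(p_n)}(\tau_n)$ converges in distribution to a standard exponential random variable.
   Context: Let $p\in[0,1]$. Let $Z=(Z(t))_{t\ge0}$ be a standard Yule process: a continuous-time pure birth process started from $Z(0)=1$ in which each individual gives birth at rate $1$. Superpose independent mutations: each newborn child is, independently of everything else, a clone of its parent (same genetic type) with probability $p$, and a mutant carrying a new genetic type (different from all previously present types) with probability $1-p$. The ancestor has type $1$, and the successive mutants receive types $2,3,\dots$ in order of their birth. For $i\in\mathbb N$ and $t\ge0$, $Y_i^{(p)}(t)$ denotes the number of individuals of type $i$ alive at time $t$ (equal to $0$ before the first type-$i$ individual is born). Let $\tau_n=\inf\{t\ge0: Z(t)=n\}$. For sequences, $a_n\sim b_n$ means $a_n/b_n\to1$, and $a_n\ll b_n$ means $a_n/b_n\to0$. *)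

theory Defs
  imports "HOL-Probability.Probability" "HOL-Library.Landau_Symbols"
begin

(* Embedded jump chain of the Yule process with clonal/mutant births.
   A state is the list of the genetic types of the individuals currently alive
   (in order of birth).  At each birth event the parent is uniform among the
   current individuals (all individuals reproduce at rate 1); the child is a
   clone of its parent with probability p, otherwise it gets a brand-new type,
   namely the next unused integer (types are 1,2,3,... in order of appearance;
   there are no deaths, so the next type is Max + 1). *)
definition yule_step :: "real \<Rightarrow> nat list \<Rightarrow> nat list pmf" where
  "yule_step p xs =
     do { i \<leftarrow> pmf_of_set {..<length xs};
          c \<leftarrow> bernoulli_pmf p;
          return_pmf (xs @ [if c then xs ! i else Suc (Max (set xs))]) }"

(* Law of the type configuration at time tau_n (the n-th individual is born),
   starting at time 0 from a single ancestor of type 1. *)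
definition yule_types_at :: "real \<Rightarrow> nat \<Rightarrow> nat list pmf" where
  "yule_types_at p n = ((\<lambda>M. bind_pmf M (yule_step p)) ^^ (n - 1)) (return_pmf [1])"

definition Y1_at_tau :: "real \<Rightarrow> nat \<Rightarrow> nat pmf" where
  "Y1_at_tau p n = map_pmf (\<lambda>xs. length (filter (\<lambda>t. t = 1) xs)) (yule_types_at p n)"

end

theory Submission
  imports Defs "HOL-Computational_Algebra.Polynomial_FPS"
begin

definition cnt :: "nat list \<Rightarrow> nat" where "cnt xs = length (filter (\<lambda>t. t = 1) xs)"

definition kstep :: "real \<Rightarrow> nat \<Rightarrow> nat \<Rightarrow> nat pmf" where
  "kstep p m k = map_pmf (\<lambda>b. if b then Suc k else k) (bernoulli_pmf (p * real k / real m))"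

fun K :: "real \<Rightarrow> nat \<Rightarrow> nat pmf" where
  "K p 0 = return_pmf 1"
| "K p (Suc j) = bind_pmf (K p j) (kstep p (Suc j))"

lemma bool_pmf_eqI:
  fixes A B :: "bool pmf"
  assumes "pmf A True = pmf B True" shows "A = B"
proof (rule pmf_eqI)
  fix b show "pmf A b = pmf B b" using assms by (cases b) (auto simp: pmf_False_conv_True[of A] pmf_False_conv_True[of B])
qed

lemma step_cnt:
  assumes p: "0 \<le> p" "p \<le> 1" and len: "length xs = m" and m: "m > 0" and one: "1 \<in> set xs"
  shows "map_pmf cnt (yule_step p xs) = kstep p m (cnt xs)"
proof -
  define k where "k = cnt xs"
  have "1 \<le> Max (set xs)" using Max_ge[OF finite_set one] .
  then have Mx: "Suc (Max (set xs)) \<noteq> 1" by simp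
  have cntapp: "cnt (xs @ [if c then xs ! i else Suc (Max (set xs))]) = (if c \<and> xs ! i = 1 then Suc k else k)" for c i
    using Mx by (auto simp: cnt_def k_def)
  define B where "B = bind_pmf (pmf_of_set {..<m}) (\<lambda>i. bind_pmf (bernoulli_pmf p) (\<lambda>c. return_pmf (c \<and> xs ! i = 1)))"
  have "map_pmf cnt (yule_step p xs) = map_pmf (\<lambda>b. if b then Suc k else k) B"
    unfolding yule_step_def B_def len
    by (simp add: map_bind_pmf cntapp)
  moreover have "B = bernoulli_pmf (p * real k / real m)"
  proof (rule bool_pmf_eqI)
    have kc: "card {i\<in>{..<m}. xs ! i = 1} = k"
      unfolding k_def cnt_def len[symmetric] length_filter_conv_card by (rule arg_cong[where f=card]) auto
    have inner: "bind_pmf (bernoulli_pmf p) (\<lambda>c. return_pmf (c \<and> P)) = (if P then bernoulli_pmf p else return_pmf False)" for P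
      by (cases P) (simp_all add: bind_return_pmf')
    have "pmf B True = (\<Sum>i<m. (if xs ! i = 1 then p else 0)) / real m"
      unfolding B_def pmf_bind inner using m p
      by (auto simp add: integral_pmf_of_set lessThan_empty_iff pmf_bind intro!: sum.cong)
    also have "(\<Sum>i<m. (if xs ! i = 1 then p else 0)) = p * real k"
      using kc by (simp add: sum.If_cases Int_def)
    finally have "pmf B True = p * real k / real m" .
    moreover have "real k \<le> real m" unfolding k_def cnt_def len[symmetric] by simp
    ultimately show "pmf B True = pmf (bernoulli_pmf (p * real k / real m)) True"
    proof -
      have "p * real k \<le> 1 * real m" using p \<open>real k \<le> real m\<close> by (intro mult_mono) auto
      then have "p * real k / real m \<le> 1" using m by (simp add: divide_le_eq)
      moreover have "0 \<le> p * real k / real m" using p by simp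
      ultimately show ?thesis using \<open>pmf B True = p * real k / real m\<close> by (simp add: pmf_bernoulli_True)
    qed
  qed
  ultimately show ?thesis unfolding kstep_def k_def by simp
qed

abbreviation ystep where "ystep p \<equiv> (\<lambda>M. bind_pmf M (yule_step p))"

lemma set_yule_step: "ys \<in> set_pmf (yule_step p xs) \<Longrightarrow> \<exists>v. ys = xs @ [v]"
  unfolding yule_step_def by auto

lemma inv_chain:
  "xs \<in> set_pmf ((ystep p ^^ j) (return_pmf [1])) \<Longrightarrow> length xs = Suc j \<and> 1 \<in> set xs"
proof (induction j arbitrary: xs)
  case 0 then show ?case by simp
next
  case (Suc j)
  then obtain ys where ys: "ys \<in> set_pmf ((ystep p ^^ j) (return_pmf [1]))" "xs \<in> set_pmf (yule_step p ys)"
    by auto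
  then obtain v where "xs = ys @ [v]" using set_yule_step by blast
  with Suc.IH[OF ys(1)] show ?case by auto
qed

lemma chain_K:
  assumes p: "0 \<le> p" "p \<le> 1"
  shows "map_pmf cnt ((ystep p ^^ j) (return_pmf [1])) = K p j"
proof (induction j)
  case 0 then show ?case by (simp add: cnt_def)
next
  case (Suc j)
  have "map_pmf cnt ((ystep p ^^ Suc j) (return_pmf [1]))
      = bind_pmf ((ystep p ^^ j) (return_pmf [1])) (\<lambda>xs. map_pmf cnt (yule_step p xs))"
    by (simp add: map_bind_pmf)
  also have "\<dots> = bind_pmf ((ystep p ^^ j) (return_pmf [1])) (\<lambda>xs. kstep p (Suc j) (cnt xs))"
  proof (rule bind_pmf_cong[OF refl])
    fix xs assume "xs \<in> set_pmf ((ystep p ^^ j) (return_pmf [1]))"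
    from inv_chain[OF this] show "map_pmf cnt (yule_step p xs) = kstep p (Suc j) (cnt xs)"
      by (intro step_cnt[OF p]) auto
  qed
  also have "\<dots> = bind_pmf (map_pmf cnt ((ystep p ^^ j) (return_pmf [1]))) (kstep p (Suc j))"
    by (simp add: bind_map_pmf)
  finally show ?case using Suc.IH by simp
qed

lemma Y1_K: "0 \<le> p \<Longrightarrow> p \<le> 1 \<Longrightarrow> Y1_at_tau p n = K p (n - 1)"
  unfolding Y1_at_tau_def yule_types_at_def using chain_K[of p "n - 1"]
  by (simp add: cnt_def[abs_def])


lemma K_support: "0 \<le> p \<Longrightarrow> p \<le> 1 \<Longrightarrow> set_pmf (K p N) \<subseteq> {1..Suc N}"
proof (induction N)
  case 0 then show ?case by simp
next
  case (Suc N)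
  have "set_pmf (kstep p m k) \<subseteq> {k, Suc k}" for m k unfolding kstep_def by auto
  with Suc show ?case by fastforce
qed

lemma measure_bind_fin:
  assumes "finite S" "set_pmf M \<subseteq> S"
  shows "measure (bind_pmf M f) A = (\<Sum>x\<in>S. measure (f x) A * pmf M x)"
proof -
  have "emeasure (measure_pmf (bind_pmf M f)) A = (\<integral>\<^sup>+x. emeasure (f x) A \<partial>measure_pmf M)"
    by (rule emeasure_bind_pmf)
  also have "\<dots> = (\<integral>\<^sup>+x. ennreal (measure (f x) A) \<partial>measure_pmf M)"
    by (simp add: measure_pmf.emeasure_eq_measure)
  also have "\<dots> = (\<Sum>x\<in>S. ennreal (measure (f x) A) * pmf M x)"
    using assms by (intro nn_integral_measure_pmf_support) auto
  also have "\<dots> = ennreal (\<Sum>x\<in>S. measure (f x) A * pmf M x)"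
    by (subst sum_ennreal[symmetric]) (auto simp: ennreal_mult)
  finally show ?thesis
    by (simp add: measure_pmf.emeasure_eq_measure sum_nonneg)
qed

lemma kstep_tail:
  assumes "k \<le> m" "m > 0" "0 \<le> p" "p \<le> 1"
  shows "measure (kstep p m k) {j. y < j} = (if y < k then 1 else if k = y then p * real k / real m else 0)"
proof -
  have q: "0 \<le> p * real k / real m" "p * real k / real m \<le> 1"
  proof -
    have "p * real k \<le> 1 * real m" using assms by (intro mult_mono) auto
    then show "p * real k / real m \<le> 1" using assms by (simp add: divide_le_eq)
  qed (use assms in simp)
  show ?thesis
  proof (cases "y < k")
    case True
    then have "(\<lambda>b. if b then Suc k else k) -` {j. y < j} = UNIV" by auto
    with True show ?thesis unfolding kstep_def by simp
  next
    case False
    show ?thesis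
    proof (cases "k = y")
      case True
      then have "(\<lambda>b. if b then Suc k else k) -` {j. y < j} = {True}" by auto
      with True q show ?thesis unfolding kstep_def by (simp add: measure_pmf_single)
    next
      case F2: False
      with False have "(\<lambda>b. if b then Suc k else k) -` {j. y < j} = {}" by auto
      with False F2 show ?thesis unfolding kstep_def by simp
    qed
  qed
qed

lemma tail_rec:
  assumes p: "0 \<le> p" "p \<le> 1"
  shows "measure (K p (Suc N)) {j. y < j} = measure (K p N) {j. y < j} + pmf (K p N) y * (p * real y / real (Suc N))"
proof -
  have supp: "set_pmf (K p N) \<subseteq> {..Suc N}" using K_support[OF p, of N] by auto
  have "measure (K p (Suc N)) {j. y < j} = (\<Sum>x\<le>Suc N. measure (kstep p (Suc N) x) {j. y < j} * pmf (K p N) x)"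
    by (simp add: measure_bind_fin[OF _ supp])
  also have "\<dots> = (\<Sum>x\<le>Suc N. (if y < x then pmf (K p N) x else 0) + (if x = y then pmf (K p N) y * (p * real y / real (Suc N)) else 0))"
    by (intro sum.cong refl) (auto simp: kstep_tail[OF _ _ p])
  also have "\<dots> = (\<Sum>x\<in>{..Suc N} \<inter> {j. y < j}. pmf (K p N) x) + pmf (K p N) y * (p * real y / real (Suc N))"
  proof -
    have "(\<Sum>x\<le>Suc N. (if x = y then pmf (K p N) y * (p * real y / real (Suc N)) else 0)) = pmf (K p N) y * (p * real y / real (Suc N))"
    proof (cases "y \<le> Suc N")
      case True then show ?thesis by (cases "y = Suc N") (auto simp: sum.delta)
    next
      case False
      then have "y \<notin> set_pmf (K p N)" using supp by auto
      then have "pmf (K p N) y = 0" by (simp add: set_pmf_eq)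
      with False show ?thesis by (simp add: sum.delta)
    qed
    then show ?thesis by (simp add: sum.distrib sum.inter_restrict)
  qed
  also have "(\<Sum>x\<in>{..Suc N} \<inter> {j. y < j}. pmf (K p N) x) = measure (K p N) ({..Suc N} \<inter> {j. y < j})"
    by (simp add: measure_measure_pmf_finite)
  also have "\<dots> = measure (K p N) {j. y < j}"
    by (rule measure_prob_cong_0) (use supp in \<open>auto simp: pmf_eq_0_set_pmf\<close>)
  finally show ?thesis .
qed

lemma pmf_as_tail:
  fixes M :: "nat pmf"
  assumes "y \<ge> 1"
  shows "pmf M y = measure (measure_pmf M) {j. y - 1 < j} - measure (measure_pmf M) {j. y < j}"
proof -
  have "{j. y - 1 < j} = {y} \<union> {j. y < j}" 
  proof (intro set_eqI)
    fix x
    have "y - 1 < x \<longleftrightarrow> x = y \<or> y < x" using assms by arith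
    then show "x \<in> {j. y - 1 < j} \<longleftrightarrow> x \<in> {y} \<union> {j. y < j}" by simp
  qed
  then have "measure (measure_pmf M) {j. y - 1 < j} = measure (measure_pmf M) {y} + measure (measure_pmf M) {j. y < j}"
    using measure_pmf.finite_measure_Union[of "{y}" M "{j. y < j}"] by simp
  then show ?thesis by (simp add: measure_pmf_single)
qed


definition PiN :: "real \<Rightarrow> nat \<Rightarrow> real" where "PiN p N = (\<Prod>m=1..N. 1 - p / real m)"
definition cc :: "real \<Rightarrow> nat \<Rightarrow> real" where
  "cc p k = (if k = 0 then 0 else p / real k * PiN p (k - 1))"
definition Hs :: "real \<Rightarrow> real fps" where "Hs p = Abs_fps (cc p)"
definition dd :: "real \<Rightarrow> nat \<Rightarrow> nat \<Rightarrow> real" where "dd p y s = fps_nth (Hs p ^ y) s"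
definition GG :: "real \<Rightarrow> nat \<Rightarrow> nat \<Rightarrow> real" where "GG p N y = (\<Sum>s\<le>N. dd p y s)"

lemma PiN_0[simp]: "PiN p 0 = 1" by (simp add: PiN_def)
lemma PiN_Suc: "PiN p (Suc k) = PiN p k * (1 - p / real (Suc k))"
  by (simp add: PiN_def prod.cl_ivl_Suc)

lemma cc_Suc: "real (Suc k) * cc p (Suc k) = p * PiN p k"
  by (simp add: cc_def)

lemma ODE: "(1 - fps_X) * fps_deriv (Hs p) = fps_const p * (1 - Hs p)"
proof (rule fps_ext)
  fix n
  have L: "fps_nth ((1 - fps_X) * fps_deriv (Hs p)) n = real (Suc n) * cc p (Suc n) - (if n = 0 then 0 else real n * cc p n)"
    by (simp add: algebra_simps Hs_def)
  show "fps_nth ((1 - fps_X) * fps_deriv (Hs p)) n = fps_nth (fps_const p * (1 - Hs p)) n"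
  proof (cases n)
    case 0 then show ?thesis unfolding L by (simp add: cc_def Hs_def)
  next
    case (Suc k)
    have "real (Suc (Suc k)) * cc p (Suc (Suc k)) - real (Suc k) * cc p (Suc k) = - p * cc p (Suc k)"
      unfolding cc_Suc by (simp add: PiN_Suc cc_def field_simps)
    then show ?thesis unfolding L using Suc by (simp add: Hs_def)
  qed
qed

lemma sumrule:
  fixes F R :: "real fps"
  assumes "(1 - fps_X) * F = R"
  shows "fps_nth F N = (\<Sum>m\<le>N. fps_nth R m)"
proof -
  have R: "fps_nth R m = fps_nth F m - (if m = 0 then 0 else fps_nth F (m - 1))" for m
  proof -
    have "R = F - fps_X * F" using assms[symmetric] by (simp add: algebra_simps)
    then have "fps_nth R m = fps_nth F m - fps_nth (fps_X * F) m" by simp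
    then show ?thesis by (simp only: fps_X_mult_nth)
  qed
  show ?thesis
    by (induction N) (simp_all add: R)
qed

lemma key:
  assumes "y \<ge> 1"
  shows "real (Suc N) * dd p y (Suc N) = p * real y * (\<Sum>s\<le>N. dd p (y - 1) s - dd p y s)"
proof -
  define H where "H = Hs p"
  have Hy: "H ^ y = H * H ^ (y - 1)" using assms by (cases y) auto
  have "(1 - fps_X) * fps_deriv (H ^ y) = fps_const (real y) * ((1 - fps_X) * fps_deriv H) * H ^ (y - 1)"
    by (simp add: fps_deriv_power algebra_simps)
  also have "\<dots> = fps_const (p * real y) * (H ^ (y - 1) - H ^ y)"
  proof -
    have c: "fps_const (p * real y) = fps_const (real y) * fps_const p" by simp
    show ?thesis unfolding H_def ODE c Hy[unfolded H_def] by (simp add: algebra_simps)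
  qed
  finally have "fps_nth (fps_deriv (H ^ y)) N = (\<Sum>m\<le>N. fps_nth (fps_const (p * real y) * (H ^ (y - 1) - H ^ y)) m)"
    by (rule sumrule)
  then show ?thesis
    by (simp add: dd_def H_def sum_distrib_left algebra_simps)
qed

lemma dd_0: "dd p y 0 = (if y = 0 then 1 else 0)"
  by (simp add: dd_def fps_nth_power_0 Hs_def cc_def)

lemma dd_0_Suc: "dd p 0 (Suc n) = 0"
  by (simp add: dd_def)

lemma tail_GG:
  assumes p: "0 \<le> p" "p \<le> 1"
  shows "measure (K p N) {j. y < j} = GG p N y"
proof (induction N arbitrary: y)
  case 0
  show ?case by (cases y) (simp_all add: GG_def dd_0)
next
  case (Suc N)
  have G: "GG p (Suc N) y = GG p N y + dd p y (Suc N)" by (simp add: GG_def)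
  show ?case
  proof (cases "y = 0")
    case True
    then show ?thesis unfolding tail_rec[OF p] G using Suc.IH by (simp add: dd_0_Suc)
  next
    case False
    then have y1: "y \<ge> 1" by simp
    have pm: "pmf (K p N) y = GG p N (y - 1) - GG p N y"
      using pmf_as_tail[OF y1, of "K p N"] Suc.IH by simp
    have "real (Suc N) * dd p y (Suc N) = p * real y * (GG p N (y - 1) - GG p N y)"
      using key[OF y1, of N p] unfolding GG_def sum_subtractf[symmetric] by simp
    then have dd: "dd p y (Suc N) = p * real y * (GG p N (y - 1) - GG p N y) / real (Suc N)"
      by (simp add: eq_divide_eq mult.commute del: of_nat_Suc)
    have "measure (K p (Suc N)) {j. y < j} = GG p N y + (GG p N (y - 1) - GG p N y) * (p * real y / real (Suc N))"
      unfolding tail_rec[OF p] pm Suc.IH ..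
    also have "\<dots> = GG p (Suc N) y" unfolding G dd by simp
    finally show ?thesis .
  qed
qed


lemma PiN_nonneg: "0 \<le> p \<Longrightarrow> p \<le> 1 \<Longrightarrow> 0 \<le> PiN p N"
  unfolding PiN_def by (intro prod_nonneg) (auto simp: field_simps)

lemma PiN_le1: "0 \<le> p \<Longrightarrow> p \<le> 1 \<Longrightarrow> PiN p N \<le> 1"
  unfolding PiN_def by (intro prod_le_1) (auto simp: field_simps)

lemma cc_nonneg: "0 \<le> p \<Longrightarrow> p \<le> 1 \<Longrightarrow> 0 \<le> cc p k"
  unfolding cc_def using PiN_nonneg by auto

lemma sum_cc: "(\<Sum>k\<le>N. cc p k) = 1 - PiN p N"
proof (induction N)
  case 0 then show ?case by (simp add: cc_def)
next
  case (Suc N)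
  have "cc p (Suc N) = p / real (Suc N) * PiN p N" by (simp add: cc_def)
  then show ?case by (simp add: Suc.IH PiN_Suc field_simps del: of_nat_Suc)
qed

lemma sum_PiN: "(1 - p) * (\<Sum>j<N. PiN p j) = real N * PiN p N"
proof (induction N)
  case 0 then show ?case by simp
next
  case (Suc N)
  have "(1 - p) * (\<Sum>j<Suc N. PiN p j) = real N * PiN p N + (1 - p) * PiN p N"
    using Suc by (simp add: algebra_simps)
  also have "\<dots> = real (Suc N) * PiN p (Suc N)"
    by (simp add: PiN_Suc field_simps)
  finally show ?case .
qed

lemma sum_kcc: "(\<Sum>k\<le>N. real k * cc p k) = p * (\<Sum>j<N. PiN p j)"
proof (induction N)
  case 0 then show ?case by (simp add: cc_def)
next
  case (Suc N)
  show ?case using cc_Suc[of N p] by (simp add: Suc.IH algebra_simps del: of_nat_Suc)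
qed

lemma pderiv_sum': "pderiv (sum f A) = (\<Sum>x\<in>A. pderiv (f x))"
  using higher_pderiv_sum[of 1 f A] by simp

definition PT :: "real \<Rightarrow> nat \<Rightarrow> real poly" where "PT p N = (\<Sum>k\<le>N. monom (cc p k) k)"

lemma coeff_PT: "coeff (PT p N) k = (if k \<le> N then cc p k else 0)"
  unfolding PT_def coeff_sum by (simp add: sum.delta)

lemma poly_PT: "poly (PT p N) 1 = 1 - PiN p N"
  unfolding PT_def by (simp add: poly_sum poly_monom sum_cc)

lemma poly_pderiv_PT: "poly (pderiv (PT p N)) 1 = (\<Sum>k\<le>N. real k * cc p k)"
  unfolding PT_def by (simp add: pderiv_sum' pderiv_monom poly_sum poly_monom)

lemma trunc_pow:
  fixes f g :: "real fps"
  assumes "\<And>k. k \<le> N \<Longrightarrow> fps_nth f k = fps_nth g k" "s \<le> N"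
  shows "fps_nth (f ^ y) s = fps_nth (g ^ y) s"
  using assms(2)
proof (induction y arbitrary: s)
  case 0 then show ?case by simp
next
  case (Suc y)
  have "fps_nth (f ^ Suc y) s = (\<Sum>i=0..s. fps_nth f i * fps_nth (f ^ y) (s - i))"
    by (simp add: fps_mult_nth)
  also have "\<dots> = (\<Sum>i=0..s. fps_nth g i * fps_nth (g ^ y) (s - i))"
    using Suc by (intro sum.cong refl) (simp add: assms(1))
  also have "\<dots> = fps_nth (g ^ Suc y) s"
    by (simp add: fps_mult_nth)
  finally show ?case .
qed

lemma dd_PT: "s \<le> N \<Longrightarrow> dd p y s = coeff (PT p N ^ y) s"
proof -
  assume s: "s \<le> N"
  have "dd p y s = fps_nth (fps_of_poly (PT p N) ^ y) s"
    unfolding dd_def by (rule trunc_pow[OF _ s]) (simp add: Hs_def coeff_PT)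
  then show ?thesis by (simp add: fps_of_poly_power[symmetric])
qed

lemma coeff_mult_nonneg:
  fixes a b :: "real poly"
  assumes "\<And>k. 0 \<le> coeff a k" "\<And>k. 0 \<le> coeff b k"
  shows "0 \<le> coeff (a * b) k"
  unfolding coeff_mult using assms by (intro sum_nonneg mult_nonneg_nonneg) auto

lemma coeff_pow_nonneg:
  fixes a :: "real poly"
  assumes "\<And>k. 0 \<le> coeff a k"
  shows "0 \<le> coeff (a ^ y) k"
proof (induction y arbitrary: k)
  case 0 then show ?case by (simp add: coeff_1)
next
  case (Suc y) then show ?case using assms by (simp add: coeff_mult_nonneg)
qed

lemma sum_coeff_poly:
  fixes Q :: "real poly"
  assumes "degree Q \<le> M"
  shows "(\<Sum>s\<le>M. coeff Q s) = poly Q 1"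
proof -
  have "poly Q 1 = (\<Sum>s\<le>degree Q. coeff Q s)" by (simp add: poly_altdef)
  also have "\<dots> = (\<Sum>s\<le>M. coeff Q s)"
    using assms by (intro sum.mono_neutral_left) (auto simp: coeff_eq_0)
  finally show ?thesis by simp
qed

lemma wsum_coeff_poly:
  fixes Q :: "real poly"
  assumes "degree Q \<le> M"
  shows "(\<Sum>s\<le>Suc M. real s * coeff Q s) = poly (pderiv Q) 1"
proof -
  have "(\<Sum>s\<le>Suc M. real s * coeff Q s) = (\<Sum>i\<le>M. real (Suc i) * coeff Q (Suc i))"
    by (subst sum.atMost_Suc_shift) simp
  also have "\<dots> = (\<Sum>i\<le>M. coeff (pderiv Q) i)"
    by (simp add: coeff_pderiv)
  also have "\<dots> = poly (pderiv Q) 1"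
    by (rule sum_coeff_poly) (use assms in \<open>simp add: degree_pderiv\<close>)
  finally show ?thesis .
qed

lemma GG_PT: "GG p N y = (\<Sum>s\<le>N. coeff (PT p N ^ y) s)"
  unfolding GG_def by (intro sum.cong refl) (simp add: dd_PT)

lemma GG_upper:
  assumes p: "0 \<le> p" "p \<le> 1"
  shows "GG p N y \<le> (1 - PiN p N) ^ y"
proof -
  define Q where "Q = PT p N ^ y"
  have nn: "0 \<le> coeff Q k" for k
    unfolding Q_def by (rule coeff_pow_nonneg) (simp add: coeff_PT cc_nonneg[OF p])
  have "GG p N y = (\<Sum>s\<le>N. coeff Q s)" by (simp add: GG_PT Q_def)
  also have "\<dots> \<le> (\<Sum>s\<le>N + degree Q. coeff Q s)"
    using nn by (intro sum_mono2) auto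
  also have "\<dots> = poly Q 1" by (rule sum_coeff_poly) simp
  also have "\<dots> = (1 - PiN p N) ^ y" by (simp add: Q_def poly_PT)
  finally show ?thesis .
qed

lemma GG_lower:
  assumes p: "0 \<le> p" "p \<le> 1/2"
  shows "(1 - PiN p N) ^ y - 2 * p * real y * PiN p N \<le> GG p N y"
proof -
  have p1: "0 \<le> p" "p \<le> 1" using p by auto
  define Q where "Q = PT p N ^ y"
  define M where "M = N + degree Q"
  have nn: "0 \<le> coeff Q k" for k
    unfolding Q_def by (rule coeff_pow_nonneg) (simp add: coeff_PT cc_nonneg[OF p1])
  have Pi: "0 \<le> PiN p N" "PiN p N \<le> 1" using PiN_nonneg[OF p1] PiN_le1[OF p1] by auto
  have "(\<Sum>s\<le>Suc M. coeff Q s * (1 - real s / real (Suc N))) \<le> (\<Sum>s\<le>Suc M. if s \<le> N then coeff Q s else 0)"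
  proof (intro sum_mono)
    fix s
    show "coeff Q s * (1 - real s / real (Suc N)) \<le> (if s \<le> N then coeff Q s else 0)"
    proof (cases "s \<le> N")
      case True
      have "coeff Q s * (1 - real s / real (Suc N)) \<le> coeff Q s * 1"
        using nn[of s] by (intro mult_left_mono) auto
      with True show ?thesis by simp
    next
      case False
      then have "1 - real s / real (Suc N) \<le> 0" by (simp add: field_simps)
      with False nn[of s] show ?thesis by (simp add: mult_nonneg_nonpos)
    qed
  qed
  also have "\<dots> = (\<Sum>s\<le>N. coeff Q s)"
    by (subst sum.inter_filter[symmetric]) (auto intro!: sum.cong simp: M_def)
  also have "\<dots> = GG p N y" by (simp add: GG_PT Q_def)
  finally have A0: "(\<Sum>s\<le>Suc M. coeff Q s * (1 - real s / real (Suc N))) \<le> GG p N y" .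
  have "(\<Sum>s\<le>Suc M. coeff Q s * (1 - real s / real (Suc N))) = (\<Sum>s\<le>Suc M. coeff Q s - real s * coeff Q s / real (Suc N))"
    by (intro sum.cong refl) (simp add: field_simps del: of_nat_Suc)
  also have "\<dots> = (\<Sum>s\<le>Suc M. coeff Q s) - (\<Sum>s\<le>Suc M. real s * coeff Q s) / real (Suc N)"
    by (simp only: sum_subtractf sum_divide_distrib)
  finally have A: "(\<Sum>s\<le>Suc M. coeff Q s) - (\<Sum>s\<le>Suc M. real s * coeff Q s) / real (Suc N) \<le> GG p N y"
    using A0 by simp
  have S1: "(\<Sum>s\<le>Suc M. coeff Q s) = (1 - PiN p N) ^ y"
    by (subst sum_coeff_poly) (simp_all add: M_def Q_def poly_PT)
  have S2: "(\<Sum>s\<le>Suc M. real s * coeff Q s) = real y * (1 - PiN p N) ^ (y - 1) * (\<Sum>k\<le>N. real k * cc p k)"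
    by (subst wsum_coeff_poly[of Q M]) (simp_all add: M_def Q_def pderiv_power poly_PT poly_pderiv_PT)
  have W: "(\<Sum>k\<le>N. real k * cc p k) = p * (real N * PiN p N) / (1 - p)"
  proof -
    have "(\<Sum>j<N. PiN p j) = real N * PiN p N / (1 - p)"
      using sum_PiN[of p N] p by (simp add: eq_divide_eq mult.commute)
    then show ?thesis by (simp add: sum_kcc)
  qed
  have "(\<Sum>s\<le>Suc M. real s * coeff Q s) / real (Suc N) \<le> 2 * p * real y * PiN p N"
  proof -
    have "(1 - PiN p N) ^ (y - 1) \<le> 1" using Pi by (intro power_le_one) auto
    then have "(\<Sum>s\<le>Suc M. real s * coeff Q s) \<le> real y * (\<Sum>k\<le>N. real k * cc p k)"
      unfolding S2 using Pi p by (intro mult_right_mono mult_left_le) (auto simp: W intro!: sum_nonneg mult_nonneg_nonneg cc_nonneg)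
    also have "\<dots> \<le> real y * (2 * p * (real N * PiN p N))"
    proof (intro mult_left_mono)
      define X where "X = p * (real N * PiN p N)"
      have X0: "0 \<le> X" unfolding X_def using p Pi by simp
      have "X * (2 * p - 1) \<le> 0" using X0 p by (intro mult_nonneg_nonpos) auto
      then have "X \<le> 2 * X * (1 - p)" by (simp add: algebra_simps)
      then have "X / (1 - p) \<le> 2 * X" using p by (simp add: divide_le_eq)
      then show "(\<Sum>k\<le>N. real k * cc p k) \<le> 2 * p * (real N * PiN p N)"
        unfolding W X_def by simp
    qed simp
    also have "\<dots> \<le> real y * (2 * p * (real (Suc N) * PiN p N))"
      using p Pi by (intro mult_left_mono mult_right_mono) auto
    finally show ?thesis by (simp add: divide_le_eq field_simps del: of_nat_Suc)
  qed
  with A S1 show ?thesis by linarith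
qed


lemma sum_inv_sq: "N \<ge> 1 \<Longrightarrow> (\<Sum>m=1..N. 1 / (real m)^2) \<le> 2 - 1 / real N"
proof (induction N rule: dec_induct)
  case base then show ?case by simp
next
  case (step N)
  have "(\<Sum>m=1..Suc N. 1 / (real m)^2) \<le> 2 - 1 / real N + 1 / (real (Suc N))^2"
    using step by simp
  also have "\<dots> \<le> 2 - 1 / real (Suc N)"
  proof -
    have "1 / (real (Suc N))^2 \<le> 1 / (real N * real (Suc N))"
      by (rule divide_left_mono) (use step(1) in \<open>auto simp: power2_eq_square\<close>)
    also have "1 / (real N * real (Suc N)) = 1 / real N - 1 / real (Suc N)"
      using step(1) by (simp add: field_simps)
    finally have "1 / (real (Suc N))^2 \<le> 1 / real N - 1 / real (Suc N)" .
    then show ?thesis by simp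
  qed
  finally show ?case .
qed

lemma harm_upper: "N \<ge> 1 \<Longrightarrow> harm N \<le> ln (real N + 1) + (1::real)"
proof -
  assume N: "N \<ge> 1"
  have "harm N - ln (real N) \<le> harm 1 - ln (real 1)"
    using euler_mascheroni_sequence_decreasing[of 1 N] N by simp
  then have "harm N \<le> ln (real N) + 1" by (simp add: harm_def)
  moreover have "ln (real N) \<le> ln (real N + 1)" using N by simp
  ultimately show ?thesis by linarith
qed

lemma PiN_upper:
  assumes "0 \<le> q" "q \<le> 1"
  shows "PiN q N \<le> exp (- q * ln (real N + 1))"
proof -
  have "PiN q N \<le> (\<Prod>m=1..N. exp (- (q / real m)))"
    unfolding PiN_def
  proof (intro prod_mono conjI)
    fix m assume "m \<in> {1..N}"
    then show "0 \<le> 1 - q / real m" using assms by (auto simp: field_simps)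
    show "1 - q / real m \<le> exp (- (q / real m))" using exp_ge_add_one_self[of "- (q / real m)"] by simp
  qed
  also have "\<dots> = exp (- q * harm N)"
    by (simp add: exp_sum[symmetric] harm_def sum_negf sum_distrib_left divide_inverse)
  also have "\<dots> \<le> exp (- q * ln (real N + 1))"
    using ln_le_harm[of N] assms by (simp add: mult_left_mono)
  finally show ?thesis .
qed

lemma PiN_lower:
  assumes "0 \<le> q" "q \<le> 1/2" "N \<ge> 1"
  shows "exp (- q * ln (real N + 1) - q - 4 * q^2) \<le> PiN q N"
proof -
  have "(\<Prod>m=1..N. exp (- (q / real m) - 2 * (q / real m)^2)) \<le> PiN q N"
    unfolding PiN_def
  proof (intro prod_mono conjI)
    fix m assume m: "m \<in> {1..N}"
    then have t: "0 \<le> q / real m" "q / real m \<le> 1/2" using assms by (auto simp: field_simps)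
    then have "1 - q / real m > 0" by linarith
    from ln_one_minus_pos_lower_bound[OF t] this
    show "exp (- (q / real m) - 2 * (q / real m)^2) \<le> 1 - q / real m"
      by (metis exp_le_cancel_iff exp_ln)
  qed simp
  also have "(\<Prod>m=1..N. exp (- (q / real m) - 2 * (q / real m)^2)) = exp (- q * harm N - 2 * q^2 * (\<Sum>m=1..N. 1 / (real m)^2))"
    by (simp add: exp_sum[symmetric] harm_def sum_negf sum_distrib_left divide_inverse sum_subtractf power_divide
        power_mult_distrib algebra_simps power_inverse)
  finally have A: "exp (- q * harm N - 2 * q^2 * (\<Sum>m=1..N. 1 / (real m)^2)) \<le> PiN q N" .
  have "- q * ln (real N + 1) - q - 4 * q^2 \<le> - q * harm N - 2 * q^2 * (\<Sum>m=1..N. 1 / (real m)^2)"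
  proof -
    have "q * harm N \<le> q * (ln (real N + 1) + 1)" using harm_upper[OF assms(3)] assms by (intro mult_left_mono) auto
    moreover have "2 * q^2 * (\<Sum>m=1..N. 1 / (real m)^2) \<le> 2 * q^2 * 2"
    proof (intro mult_left_mono)
      have "0 \<le> 1 / real N" by simp
      then show "(\<Sum>m=1..N. 1 / (real m)^2) \<le> 2" using sum_inv_sq[OF assms(3)] by linarith
    qed simp
    ultimately show ?thesis by (simp add: algebra_simps)
  qed
  then show ?thesis using A by (meson exp_le_cancel_iff order.trans)
qed

lemma PiN_bounds:
  assumes "0 \<le> q" "q \<le> 1/2" "n \<ge> 2"
  shows "exp (- q * ln (real n) - q - 4 * q^2) \<le> PiN q (n - 1)" "PiN q (n - 1) \<le> exp (- q * ln (real n))"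
proof -
  have e: "real (n - 1) + 1 = real n" using assms by simp
  show "exp (- q * ln (real n) - q - 4 * q^2) \<le> PiN q (n - 1)"
    using PiN_lower[of q "n - 1"] assms e by simp
  show "PiN q (n - 1) \<le> exp (- q * ln (real n))"
    using PiN_upper[of q "n - 1"] assms e by simp
qed

lemma Pi_asymp:
  fixes q :: "nat \<Rightarrow> real"
  assumes q0: "\<And>n. 0 \<le> q n" and qlim: "q \<longlonglongrightarrow> 0"
  shows "(\<lambda>n. exp (q n * ln (real n)) * PiN (q n) (n - 1)) \<longlonglongrightarrow> 1"
proof (rule tendsto_sandwich[where f = "\<lambda>n. exp (- q n - 4 * (q n)^2)" and h = "\<lambda>_. 1"])
  have ev: "eventually (\<lambda>n. q n \<le> 1/2 \<and> n \<ge> 2) sequentially"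
  proof -
    have "eventually (\<lambda>n. q n < 1/2) sequentially" using qlim by (rule order_tendstoD) simp
    then show ?thesis using eventually_ge_at_top[of 2]
      by eventually_elim auto
  qed
  show "eventually (\<lambda>n. exp (- q n - 4 * (q n)^2) \<le> exp (q n * ln (real n)) * PiN (q n) (n - 1)) sequentially"
    using ev
  proof eventually_elim
    case (elim n)
    have "exp (- q n - 4 * (q n)^2) = exp (q n * ln (real n)) * exp (- q n * ln (real n) - q n - 4 * (q n)^2)"
      by (simp add: exp_add[symmetric])
    also have "\<dots> \<le> exp (q n * ln (real n)) * PiN (q n) (n - 1)"
      using PiN_bounds(1)[of "q n" n] elim q0[of n] by (intro mult_left_mono) auto
    finally show ?case .
  qed
  show "eventually (\<lambda>n. exp (q n * ln (real n)) * PiN (q n) (n - 1) \<le> 1) sequentially"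
    using ev
  proof eventually_elim
    case (elim n)
    have "exp (q n * ln (real n)) * PiN (q n) (n - 1) \<le> exp (q n * ln (real n)) * exp (- q n * ln (real n))"
      using PiN_bounds(2)[of "q n" n] elim q0[of n] by (intro mult_left_mono) auto
    also have "\<dots> = 1" by (simp add: exp_add[symmetric])
    finally show ?case .
  qed
  have "(\<lambda>n. exp (- q n - 4 * (q n)^2)) \<longlonglongrightarrow> exp (- 0 - 4 * 0^2)"
    by (intro tendsto_intros qlim)
  then show "(\<lambda>n. exp (- q n - 4 * (q n)^2)) \<longlonglongrightarrow> 1" by simp
qed simp

lemma Pi_lim_c:
  fixes q :: "nat \<Rightarrow> real"
  assumes q0: "\<And>n. 0 \<le> q n" and qlim: "q \<longlonglongrightarrow> 0" and c: "(\<lambda>n. q n * ln (real n)) \<longlonglongrightarrow> c"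
  shows "(\<lambda>n. PiN (q n) (n - 1)) \<longlonglongrightarrow> exp (- c)"
proof -
  have "(\<lambda>n. exp (- (q n * ln (real n))) * (exp (q n * ln (real n)) * PiN (q n) (n - 1))) \<longlonglongrightarrow> exp (- c) * 1"
    by (intro tendsto_intros c Pi_asymp q0 qlim)
  moreover have "(\<lambda>n. exp (- (q n * ln (real n))) * (exp (q n * ln (real n)) * PiN (q n) (n - 1))) = (\<lambda>n. PiN (q n) (n - 1))"
    by (rule ext) (simp add: mult.assoc[symmetric] exp_add[symmetric])
  ultimately show ?thesis by simp
qed


definition Tl :: "real \<Rightarrow> nat \<Rightarrow> nat \<Rightarrow> real" where
  "Tl p n y = measure (measure_pmf (Y1_at_tau p n)) {j. y < j}"

lemma Tl_bounds:
  assumes "0 \<le> p" "p \<le> 1/2"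
  shows "(1 - PiN p (n - 1)) ^ y - 2 * p * real y * PiN p (n - 1) \<le> Tl p n y"
        "Tl p n y \<le> (1 - PiN p (n - 1)) ^ y"
proof -
  have p1: "0 \<le> p" "p \<le> 1" using assms by auto
  have T: "Tl p n y = GG p (n - 1) y" unfolding Tl_def Y1_K[OF p1] by (rule tail_GG[OF p1])
  show "(1 - PiN p (n - 1)) ^ y - 2 * p * real y * PiN p (n - 1) \<le> Tl p n y"
    unfolding T by (rule GG_lower[OF assms])
  show "Tl p n y \<le> (1 - PiN p (n - 1)) ^ y"
    unfolding T by (rule GG_upper[OF p1])
qed

lemma cdf_nat_scaled:
  fixes M :: "nat pmf"
  assumes c: "c > 0"
  shows "cdf (distr (measure_pmf M) borel (\<lambda>k. c * real k)) x =
         (if x < 0 then 0 else 1 - measure (measure_pmf M) {j. nat \<lfloor>x / c\<rfloor> < j})"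
proof -
  have "cdf (distr (measure_pmf M) borel (\<lambda>k. c * real k)) x = measure (measure_pmf M) {k. c * real k \<le> x}"
    unfolding cdf_def2 by (subst measure_distr) (auto simp: vimage_def)
  also have "\<dots> = (if x < 0 then 0 else 1 - measure (measure_pmf M) {j. nat \<lfloor>x / c\<rfloor> < j})"
  proof (cases "x < 0")
    case True
    then have "{k. c * real k \<le> x} = {}" using c by (auto simp: not_le intro: less_le_trans[OF _ mult_nonneg_nonneg])
    with True show ?thesis by simp
  next
    case False
    have "{k. c * real k \<le> x} = UNIV - {j. nat \<lfloor>x / c\<rfloor> < j}"
    proof (intro set_eqI)
      fix k :: nat
      have "c * real k \<le> x \<longleftrightarrow> real k \<le> x / c" using c by (simp add: field_simps)
      also have "\<dots> \<longleftrightarrow> int k \<le> \<lfloor>x / c\<rfloor>" by (simp add: le_floor_iff)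
      also have "\<dots> \<longleftrightarrow> k \<le> nat \<lfloor>x / c\<rfloor>" using False c by (simp add: le_nat_iff)
      finally show "k \<in> {k. c * real k \<le> x} \<longleftrightarrow> k \<in> UNIV - {j. nat \<lfloor>x / c\<rfloor> < j}" by auto
    qed
    then show ?thesis using False
      using measure_pmf.prob_compl[of "{j. nat \<lfloor>x / c\<rfloor> < j}" M] by simp
  qed
  finally show ?thesis .
qed

lemma cdf_nat:
  fixes M :: "nat pmf"
  shows "cdf (distr (measure_pmf M) borel real) x =
         (if x < 0 then 0 else 1 - measure (measure_pmf M) {j. nat \<lfloor>x\<rfloor> < j})"
  using cdf_nat_scaled[of 1 M x] by simp

lemma tail_return1: "measure (measure_pmf (return_pmf (1::nat))) {j. y < j} = (1 - 1) ^ y"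
  by (cases y) (auto simp: indicator_def)

lemma geom_sum: "(\<Sum>g<y. (1 - q) ^ g * q) = 1 - (1 - q :: real) ^ y"
  by (induction y) (simp_all add: algebra_simps)

lemma tail_geom:
  assumes "0 < q" "q \<le> 1"
  shows "measure (measure_pmf (map_pmf Suc (geometric_pmf q))) {j. y < j} = (1 - q) ^ y"
proof -
  have "measure (measure_pmf (map_pmf Suc (geometric_pmf q))) {j. y < j} = measure (measure_pmf (geometric_pmf q)) (UNIV - {..<y})"
    by (simp add: vimage_def) (rule arg_cong[where f = "measure _"], auto)
  also have "\<dots> = 1 - measure (measure_pmf (geometric_pmf q)) {..<y}"
    using measure_pmf.prob_compl[of "{..<y}" "geometric_pmf q"] by simp
  also have "\<dots> = 1 - (\<Sum>g<y. (1 - q) ^ g * q)"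
    using assms by (simp add: measure_measure_pmf_finite)
  finally show ?thesis by (simp add: geom_sum)
qed

lemma cdf_exp: "cdf (density lborel (exponential_density 1)) x = (if x < 0 then 0 else 1 - exp (- x))"
proof -
  have "emeasure (density lborel (exponential_density 1)) {..x} = ennreal (erlang_CDF 0 1 x)"
    by (rule emeasure_erlang_density) simp
  then have "measure (density lborel (exponential_density 1)) {..x} = erlang_CDF 0 1 x"
    by (simp add: measure_def erlang_CDF_0)
  then show ?thesis by (simp add: cdf_def2 erlang_CDF_0)
qed


lemma ev_half: "(p :: nat \<Rightarrow> real) \<longlonglongrightarrow> 0 \<Longrightarrow> eventually (\<lambda>n. p n \<le> 1/2) sequentially"
proof -
  assume "p \<longlonglongrightarrow> 0"
  then have "eventually (\<lambda>n. p n < 1/2) sequentially" by (rule order_tendstoD) simp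
  then show ?thesis by eventually_elim simp
qed

lemma conv_fixed:
  fixes p :: "nat \<Rightarrow> real"
  assumes p0: "\<And>n. 0 \<le> p n" and plim: "p \<longlonglongrightarrow> 0" and Pl: "(\<lambda>n. PiN (p n) (n - 1)) \<longlonglongrightarrow> P"
  shows "(\<lambda>n. Tl (p n) n y) \<longlonglongrightarrow> (1 - P) ^ y"
proof (rule tendsto_sandwich[where f = "\<lambda>n. (1 - PiN (p n) (n - 1)) ^ y - 2 * p n * real y * PiN (p n) (n - 1)"
      and h = "\<lambda>n. (1 - PiN (p n) (n - 1)) ^ y"])
  show "eventually (\<lambda>n. (1 - PiN (p n) (n - 1)) ^ y - 2 * p n * real y * PiN (p n) (n - 1) \<le> Tl (p n) n y) sequentially"
    using ev_half[OF plim] by eventually_elim (rule Tl_bounds(1)[OF p0])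
  show "eventually (\<lambda>n. Tl (p n) n y \<le> (1 - PiN (p n) (n - 1)) ^ y) sequentially"
    using ev_half[OF plim] by eventually_elim (rule Tl_bounds(2)[OF p0])
  have "(\<lambda>n. (1 - PiN (p n) (n - 1)) ^ y - 2 * p n * real y * PiN (p n) (n - 1)) \<longlonglongrightarrow> (1 - P) ^ y - 2 * 0 * real y * P"
    by (intro tendsto_intros plim Pl)
  then show "(\<lambda>n. (1 - PiN (p n) (n - 1)) ^ y - 2 * p n * real y * PiN (p n) (n - 1)) \<longlonglongrightarrow> (1 - P) ^ y" by simp
  show "(\<lambda>n. (1 - PiN (p n) (n - 1)) ^ y) \<longlonglongrightarrow> (1 - P) ^ y"
    by (intro tendsto_intros Pl)
qed

lemma ln_nat_nonneg: "0 \<le> ln (real (n::nat))"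
  by (cases n) auto

lemma lnlim_a:
  fixes p :: "nat \<Rightarrow> real"
  assumes p0: "\<And>n. 0 \<le> p n" and o: "p \<in> o(\<lambda>n. 1 / ln (real n))"
  shows "(\<lambda>n. p n * ln (real n)) \<longlonglongrightarrow> 0"
proof (rule order_tendstoI)
  fix a :: real assume "a < 0"
  then show "eventually (\<lambda>n. a < p n * ln (real n)) sequentially"
    using p0 ln_nat_nonneg by (intro always_eventually allI) (meson less_le_trans mult_nonneg_nonneg)
next
  fix a :: real assume a: "0 < a"
  have "eventually (\<lambda>n. norm (p n) \<le> (a / 2) * norm (1 / ln (real n))) sequentially"
    using landau_o.smallD[OF o, of "a/2"] a by simp
  then show "eventually (\<lambda>n. p n * ln (real n) < a) sequentially"
    using eventually_ge_at_top[of 2]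
  proof eventually_elim
    case (elim n)
    then have ln: "ln (real n) > 0" by simp
    with elim(1) p0[of n] have "p n \<le> (a / 2) / ln (real n)" by simp
    with ln have "p n * ln (real n) \<le> a / 2" by (simp add: le_divide_eq)
    with a show ?case by simp
  qed
qed

lemma lnlim_b:
  fixes p :: "nat \<Rightarrow> real"
  assumes a: "a > 0" and eq: "p \<sim>[sequentially] (\<lambda>n. a / ln (real n))"
  shows "(\<lambda>n. p n * ln (real n)) \<longlonglongrightarrow> a"
proof -
  have "eventually (\<lambda>n. p n \<noteq> 0 \<or> a / ln (real n) \<noteq> 0) sequentially"
    using eventually_ge_at_top[of 2] by eventually_elim (use a in auto)
  from asymp_equivD_strong[OF eq this]
  have "(\<lambda>n. a * (p n / (a / ln (real n)))) \<longlonglongrightarrow> a * 1" by (intro tendsto_intros)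
  moreover have "a * (p n / (a / ln (real n))) = p n * ln (real n)" for n
    using a by (simp add: divide_divide_eq_right)
  ultimately show ?thesis by simp
qed

lemma lnlim_c:
  fixes p :: "nat \<Rightarrow> real"
  assumes p0: "\<And>n. 0 \<le> p n" and o: "(\<lambda>n. 1 / ln (real n)) \<in> o(p)"
  shows "filterlim (\<lambda>n. p n * ln (real n)) at_top sequentially"
  unfolding filterlim_at_top
proof
  fix Z :: real
  define Z' where "Z' = max Z 1"
  have Z': "Z' > 0" "Z \<le> Z'" unfolding Z'_def by auto
  have "eventually (\<lambda>n. norm (1 / ln (real n)) \<le> (1 / Z') * norm (p n)) sequentially"
    using landau_o.smallD[OF o, of "1 / Z'"] Z' by simp
  then show "eventually (\<lambda>n. Z \<le> p n * ln (real n)) sequentially"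
    using eventually_ge_at_top[of 2]
  proof eventually_elim
    case (elim n)
    then have ln: "ln (real n) > 0" by simp
    with elim(1) p0[of n] have "1 / ln (real n) \<le> p n / Z'" by simp
    with ln Z' have "Z' \<le> p n * ln (real n)" by (simp add: field_simps)
    with Z' show ?case by simp
  qed
qed


lemma conv_c:
  fixes p :: "nat \<Rightarrow> real"
  assumes p0: "\<And>n. 0 \<le> p n" and plim: "p \<longlonglongrightarrow> 0"
    and pinf: "filterlim (\<lambda>n. p n * ln (real n)) at_top sequentially" and x: "x \<ge> 0"
  shows "(\<lambda>n. Tl (p n) n (nat \<lfloor>x * real n powr p n\<rfloor>)) \<longlonglongrightarrow> exp (- x)"
proof -
  define E where "E n = exp (p n * ln (real n))" for n
  define Pi where "Pi n = PiN (p n) (n - 1)" for n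
  define y where "y n = nat \<lfloor>x * E n\<rfloor>" for n
  have Epos: "E n > 0" for n unfolding E_def by simp
  have Einf: "filterlim E at_top sequentially"
    unfolding E_def by (rule filterlim_compose[OF exp_at_top pinf])
  have Einv: "(\<lambda>n. inverse (E n)) \<longlonglongrightarrow> 0"
    by (rule tendsto_inverse_0_at_top[OF Einf])
  have EPi: "(\<lambda>n. E n * Pi n) \<longlonglongrightarrow> 1"
    unfolding E_def Pi_def by (rule Pi_asymp[OF p0 plim])
  have p1: "0 \<le> p n" "p n \<le> 1" if "p n \<le> 1/2" for n using p0[of n] that by auto
  have Pi_nn: "0 \<le> Pi n" if "p n \<le> 1/2" for n unfolding Pi_def using PiN_nonneg[OF p1[OF that]] .
  have yE: "(\<lambda>n. real (y n) / E n) \<longlonglongrightarrow> x"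
  proof (rule tendsto_sandwich[where f = "\<lambda>n. x - inverse (E n)" and h = "\<lambda>_. x"])
    have fl: "real (y n) = of_int \<lfloor>x * E n\<rfloor>" for n
      unfolding y_def using x Epos[of n] by simp
    show "eventually (\<lambda>n. x - inverse (E n) \<le> real (y n) / E n) sequentially"
    proof (intro always_eventually allI)
      fix n
      have "x * E n - 1 \<le> real (y n)" unfolding fl by linarith
      then have "(x * E n - 1) / E n \<le> real (y n) / E n"
        using Epos[of n] by (intro divide_right_mono) auto
      moreover have "(x * E n - 1) / E n = x - inverse (E n)"
        using Epos[of n] by (simp add: field_simps)
      ultimately show "x - inverse (E n) \<le> real (y n) / E n" by simp
    qed
    show "eventually (\<lambda>n. real (y n) / E n \<le> x) sequentially"
    proof (intro always_eventually allI)
      fix n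
      have "real (y n) \<le> x * E n" unfolding fl by linarith
      then show "real (y n) / E n \<le> x"
        using Epos[of n] by (simp add: field_simps)
    qed
    show "(\<lambda>n. x - inverse (E n)) \<longlonglongrightarrow> x"
      using tendsto_diff[OF tendsto_const Einv, of x] by simp
  qed simp
  have yPi: "(\<lambda>n. real (y n) * Pi n) \<longlonglongrightarrow> x"
  proof -
    have "(\<lambda>n. (real (y n) / E n) * (E n * Pi n)) \<longlonglongrightarrow> x * 1" by (intro tendsto_intros yE EPi)
    moreover have "(real (y n) / E n) * (E n * Pi n) = real (y n) * Pi n" for n
      using Epos[of n] by simp
    ultimately show ?thesis by simp
  qed
  have Pi0: "Pi \<longlonglongrightarrow> 0"
  proof -
    have "(\<lambda>n. inverse (E n) * (E n * Pi n)) \<longlonglongrightarrow> 0 * 1" by (intro tendsto_intros Einv EPi)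
    moreover have "inverse (E n) * (E n * Pi n) = Pi n" for n
      using Epos[of n] by simp
    ultimately show ?thesis by (simp add: fun_eq_iff)
  qed
  have evPi: "eventually (\<lambda>n. Pi n \<le> 1/2 \<and> p n \<le> 1/2) sequentially"
    using ev_half[OF Pi0] ev_half[OF plim] by eventually_elim simp
  have L: "(\<lambda>n. real (y n) * ln (1 - Pi n)) \<longlonglongrightarrow> - x"
  proof (rule tendsto_sandwich[where f = "\<lambda>n. - (real (y n) * Pi n) - 2 * (real (y n) * Pi n) * Pi n"
        and h = "\<lambda>n. - (real (y n) * Pi n)"])
    show "eventually (\<lambda>n. - (real (y n) * Pi n) - 2 * (real (y n) * Pi n) * Pi n \<le> real (y n) * ln (1 - Pi n)) sequentially"
      using evPi
    proof eventually_elim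
      case (elim n)
      have "- Pi n - 2 * (Pi n)^2 \<le> ln (1 - Pi n)"
        using ln_one_minus_pos_lower_bound[of "Pi n"] elim Pi_nn[of n] by simp
      then have "real (y n) * (- Pi n - 2 * (Pi n)^2) \<le> real (y n) * ln (1 - Pi n)"
        by (intro mult_left_mono) auto
      then show ?case by (simp add: algebra_simps power2_eq_square)
    qed
    show "eventually (\<lambda>n. real (y n) * ln (1 - Pi n) \<le> - (real (y n) * Pi n)) sequentially"
      using evPi
    proof eventually_elim
      case (elim n)
      have "ln (1 - Pi n) \<le> (1 - Pi n) - 1"
        using elim by (intro ln_le_minus_one) simp
      then have "real (y n) * ln (1 - Pi n) \<le> real (y n) * (- Pi n)"
        by (intro mult_left_mono) auto
      then show ?case by simp
    qed
    have "(\<lambda>n. - (real (y n) * Pi n) - 2 * (real (y n) * Pi n) * Pi n) \<longlonglongrightarrow> - x - 2 * x * 0"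
      by (intro tendsto_intros yPi Pi0)
    then show "(\<lambda>n. - (real (y n) * Pi n) - 2 * (real (y n) * Pi n) * Pi n) \<longlonglongrightarrow> - x" by simp
    show "(\<lambda>n. - (real (y n) * Pi n)) \<longlonglongrightarrow> - x" by (intro tendsto_intros yPi)
  qed
  have pw: "(\<lambda>n. (1 - Pi n) ^ y n) \<longlonglongrightarrow> exp (- x)"
  proof -
    have "(\<lambda>n. exp (real (y n) * ln (1 - Pi n))) \<longlonglongrightarrow> exp (- x)" by (intro tendsto_intros L)
    moreover have "eventually (\<lambda>n. exp (real (y n) * ln (1 - Pi n)) = (1 - Pi n) ^ y n) sequentially"
      using evPi
    proof eventually_elim
      case (elim n)
      then have "1 - Pi n > 0" by simp
      then show ?case by (simp add: exp_of_nat_mult)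
    qed
    ultimately show ?thesis using tendsto_cong by fastforce
  qed
  have T: "(\<lambda>n. Tl (p n) n (y n)) \<longlonglongrightarrow> exp (- x)"
  proof (rule tendsto_sandwich[where f = "\<lambda>n. (1 - Pi n) ^ y n - 2 * p n * (real (y n) * Pi n)"
        and h = "\<lambda>n. (1 - Pi n) ^ y n"])
    show "eventually (\<lambda>n. (1 - Pi n) ^ y n - 2 * p n * (real (y n) * Pi n) \<le> Tl (p n) n (y n)) sequentially"
      using evPi
    proof eventually_elim
      case (elim n)
      show ?case using Tl_bounds(1)[OF p0[of n], of n "y n"] elim unfolding Pi_def by (simp add: mult.assoc)
    qed
    show "eventually (\<lambda>n. Tl (p n) n (y n) \<le> (1 - Pi n) ^ y n) sequentially"
      using evPi
    proof eventually_elim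
      case (elim n)
      show ?case using Tl_bounds(2)[OF p0[of n], of n "y n"] elim unfolding Pi_def by simp
    qed
    have "(\<lambda>n. (1 - Pi n) ^ y n - 2 * p n * (real (y n) * Pi n)) \<longlonglongrightarrow> exp (- x) - 2 * 0 * x"
      by (intro tendsto_intros pw plim yPi)
    then show "(\<lambda>n. (1 - Pi n) ^ y n - 2 * p n * (real (y n) * Pi n)) \<longlonglongrightarrow> exp (- x)" by simp
  qed (rule pw)
  have "eventually (\<lambda>n. Tl (p n) n (y n) = Tl (p n) n (nat \<lfloor>x * real n powr p n\<rfloor>)) sequentially"
    using eventually_ge_at_top[of 1]
  proof eventually_elim
    case (elim n)
    then have "real n powr p n = E n" unfolding E_def by (simp add: powr_def mult.commute)
    then show ?case unfolding y_def by simp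
  qed
  with T show ?thesis using tendsto_cong by fastforce
qed


theorem proposition2p1:
  fixes p :: "nat \<Rightarrow> real"
  assumes p_range: "\<And>n. 0 \<le> p n \<and> p n \<le> 1"
    and p_lim: "p \<longlonglongrightarrow> 0"
  shows "(p \<in> o(\<lambda>n. 1 / ln (real n)) \<longrightarrow>
           weak_conv_m (\<lambda>n. distr (measure_pmf (Y1_at_tau (p n) n)) borel real)
                       (distr (measure_pmf (return_pmf (1::nat))) borel real))
       \<and> (\<forall>a::real. a > 0 \<longrightarrow> p \<sim>[sequentially] (\<lambda>n. a / ln (real n)) \<longrightarrow>
           weak_conv_m (\<lambda>n. distr (measure_pmf (Y1_at_tau (p n) n)) borel real)
                       (distr (measure_pmf (map_pmf Suc (geometric_pmf (exp (- a))))) borel real))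
       \<and> ((\<lambda>n. 1 / ln (real n)) \<in> o(p) \<and> p \<in> o(\<lambda>n. 1) \<longrightarrow>
           weak_conv_m (\<lambda>n. distr (measure_pmf (Y1_at_tau (p n) n)) borel
                                   (\<lambda>k. real n powr (- p n) * real k))
                       (density lborel (exponential_density 1)))"
proof (intro conjI impI allI)
  have p0: "\<And>n. 0 \<le> p n" using p_range by simp
  have Tl': "measure (measure_pmf (Y1_at_tau (p n) n)) {j. y < j} = Tl (p n) n y" for n y
    by (simp add: Tl_def)
  {
    fix Lim :: "nat pmf" and P :: real
    assume Pl: "(\<lambda>n. PiN (p n) (n - 1)) \<longlonglongrightarrow> P"
      and tl: "\<And>y. measure (measure_pmf Lim) {j. y < j} = (1 - P) ^ y"
    have "weak_conv_m (\<lambda>n. distr (measure_pmf (Y1_at_tau (p n) n)) borel real) (distr (measure_pmf Lim) borel real)"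
      unfolding weak_conv_m_def weak_conv_def
    proof (intro allI impI)
      fix x :: real
      show "(\<lambda>n. cdf (distr (measure_pmf (Y1_at_tau (p n) n)) borel real) x) \<longlonglongrightarrow> cdf (distr (measure_pmf Lim) borel real) x"
      proof (cases "x < 0")
        case True then show ?thesis unfolding cdf_nat by simp
      next
        case False
        have "(\<lambda>n. 1 - Tl (p n) n (nat \<lfloor>x\<rfloor>)) \<longlonglongrightarrow> 1 - (1 - P) ^ (nat \<lfloor>x\<rfloor>)"
          by (intro tendsto_intros conv_fixed[OF p0 p_lim Pl])
        then show ?thesis using False unfolding cdf_nat Tl' tl by simp
      qed
    qed
  } note fixed = this
  show "weak_conv_m (\<lambda>n. distr (measure_pmf (Y1_at_tau (p n) n)) borel real)
                       (distr (measure_pmf (return_pmf (1::nat))) borel real)"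
    if o: "p \<in> o(\<lambda>n. 1 / ln (real n))"
  proof (rule fixed)
    show "(\<lambda>n. PiN (p n) (n - 1)) \<longlonglongrightarrow> 1"
      using Pi_lim_c[OF p0 p_lim lnlim_a[OF p0 o]] by simp
  qed (rule tail_return1)
  show "weak_conv_m (\<lambda>n. distr (measure_pmf (Y1_at_tau (p n) n)) borel real)
                       (distr (measure_pmf (map_pmf Suc (geometric_pmf (exp (- a))))) borel real)"
    if a: "a > 0" and eq: "p \<sim>[sequentially] (\<lambda>n. a / ln (real n))" for a :: real
  proof (rule fixed)
    show "(\<lambda>n. PiN (p n) (n - 1)) \<longlonglongrightarrow> exp (- a)"
      by (rule Pi_lim_c[OF p0 p_lim lnlim_b[OF a eq]])
    show "measure (measure_pmf (map_pmf Suc (geometric_pmf (exp (- a))))) {j. y < j} = (1 - exp (- a)) ^ y" for y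
      by (rule tail_geom) (use a in auto)
  qed
  show "weak_conv_m (\<lambda>n. distr (measure_pmf (Y1_at_tau (p n) n)) borel
                                   (\<lambda>k. real n powr (- p n) * real k))
                       (density lborel (exponential_density 1))"
    if hyp: "(\<lambda>n. 1 / ln (real n)) \<in> o(p) \<and> p \<in> o(\<lambda>n. 1)"
    unfolding weak_conv_m_def weak_conv_def
  proof (intro allI impI)
    fix x :: real
    have pinf: "filterlim (\<lambda>n. p n * ln (real n)) at_top sequentially"
      using lnlim_c[of p, OF p0] hyp by blast
    have ev: "eventually (\<lambda>n. cdf (distr (measure_pmf (Y1_at_tau (p n) n)) borel (\<lambda>k. real n powr (- p n) * real k)) x
              = (if x < 0 then 0 else 1 - Tl (p n) n (nat \<lfloor>x * real n powr p n\<rfloor>))) sequentially"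
      using eventually_ge_at_top[of 1]
    proof eventually_elim
      case (elim n)
      then have c: "real n powr (- p n) > 0" by simp
      have "x / real n powr (- p n) = x * real n powr p n"
        by (simp add: powr_minus divide_inverse)
      then show ?case unfolding cdf_nat_scaled[OF c] Tl' by simp
    qed
    have "(\<lambda>n. if x < 0 then 0 else 1 - Tl (p n) n (nat \<lfloor>x * real n powr p n\<rfloor>)) \<longlonglongrightarrow> (if x < 0 then 0 else 1 - exp (- x))"
    proof (cases "x < 0")
      case True then show ?thesis by simp
    next
      case False
      have "(\<lambda>n. 1 - Tl (p n) n (nat \<lfloor>x * real n powr p n\<rfloor>)) \<longlonglongrightarrow> 1 - exp (- x)"
        using False by (intro tendsto_intros conv_c[OF p0 p_lim pinf]) simp
      with False show ?thesis by simp
    qed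
    then show "(\<lambda>n. cdf (distr (measure_pmf (Y1_at_tau (p n) n)) borel (\<lambda>k. real n powr (- p n) * real k)) x)
          \<longlonglongrightarrow> cdf (density lborel (exponential_density 1)) x"
      unfolding cdf_exp using tendsto_cong[OF ev] by simp
  qed
qed

end
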